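(* Let $m\in(1,2]$ and let $U\in C^3(\mathbb{R}^d)$ satisfy: there exists $A_1\ge0$ with $\|D^kU(q)\|\le A_1(\|q\|+1)^{m-k}$ for all $q$ and $k=2,3$; and there exist $A_3>0$, $A_4\in\mathbb{R}$ with $\langle\nabla U(q),q\rangle\ge A_3\|q\|^m-A_4$ for all $q$. Let $T\in\mathbb{N}^*$ and for $a>0$ let $V_a(q)=\exp(a\|q\|)$. Define $\tilde Q_{h,T}V_a(q)=(2\pi)^{-d/2}\int_{\mathbb{R}^d}V_a(\Phi^{q,T}_h(q,p))e^{-\|p\|^2/2}dp$. (a) If $m\in(1,2)$, then for all $h>0$ there exist $a>0$, $\lambda\in[0,1)$ and $b\ge0$ such that $\tilde Q_{h,T}V_a\le\lambda V_a+b$ on $\mathbb{R}^d$. (b) If $m=2$, there exists $h_0>0$ such that for all $h\in(0,h_0]$ there exist $a>0$, $\lambda\in[0,1)$, $b\ge0$ with $\tilde Q_{h,T}V_a\le\lambda V_a+b$ on $\mathbb{R}^d$.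
   Context: $D^kU$ is the $k$-th differential with operator norm. For $h>0$ the leapfrog map is $\Phi_h=\Psi^{(1)}_h\circ\Psi^{(2)}_h\circ\Psi^{(1)}_h$ with $\Psi^{(1)}_h(q,p)=(q,p-(h/2)\nabla U(q))$ and $\Psi^{(2)}_h(q,p)=(q+hp,p)$; $\Phi^{\circ T}_h$ is its $T$-fold composition and $\Phi^{q,T}_h$ the position component of $\Phi^{\circ T}_h$. *)

theory Defs
  imports "HOL-Analysis.Analysis"
begin

text \<open>Leapfrog integrator, parametrised by the gradient field gU of the potential U.\<close>

definition psi1 :: "('a::real_normed_vector \<Rightarrow> 'a) \<Rightarrow> real \<Rightarrow> 'a \<times> 'a \<Rightarrow> 'a \<times> 'a" where
  "psi1 gU h = (\<lambda>(q, p). (q, p - (h / 2) *\<^sub>R gU q))"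

definition psi2 :: "real \<Rightarrow> 'a::real_normed_vector \<times> 'a \<Rightarrow> 'a \<times> 'a" where
  "psi2 h = (\<lambda>(q, p). (q + h *\<^sub>R p, p))"

definition leapfrog :: "('a::real_normed_vector \<Rightarrow> 'a) \<Rightarrow> real \<Rightarrow> 'a \<times> 'a \<Rightarrow> 'a \<times> 'a" where
  "leapfrog gU h = psi1 gU h \<circ> psi2 h \<circ> psi1 gU h"

definition leapfrog_q :: "('a::real_normed_vector \<Rightarrow> 'a) \<Rightarrow> real \<Rightarrow> nat \<Rightarrow> 'a \<Rightarrow> 'a \<Rightarrow> 'a" where
  "leapfrog_q gU h T q p = fst ((leapfrog gU h ^^ T) (q, p))"

definition Vfun :: "real \<Rightarrow> 'a::real_normed_vector \<Rightarrow> real" where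
  "Vfun a q = exp (a * norm q)"

text \<open>The operator Q tilde applied to V_a, as an extended nonnegative real (the integral may diverge).\<close>
definition Qtilde_V :: "('a::euclidean_space \<Rightarrow> 'a) \<Rightarrow> real \<Rightarrow> nat \<Rightarrow> real \<Rightarrow> 'a \<Rightarrow> ennreal" where
  "Qtilde_V gU h T a q =
     ennreal ((2 * pi) powr (- real DIM('a) / 2)) *
     (\<integral>\<^sup>+ p. ennreal (Vfun a (leapfrog_q gU h T q p) * exp (- (norm p)\<^sup>2 / 2)) \<partial>lborel)"

end

theory Submission
  imports Defs "HOL-Probability.Probability" "HOL-Real_Asymp.Real_Asymp"
begin


lemma gauss1_finite: "(\<integral>\<^sup>+x. ennreal (exp (- x\<^sup>2 / 4)) \<partial>lborel) < \<infinity>"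
proof -
  have i: "integrable lborel (\<lambda>x. sqrt (4*pi) * normal_density 0 (sqrt 2) x)"
    by (intro integrable_mult_right) simp
  have eq: "sqrt (4*pi) * normal_density 0 (sqrt 2) x = exp (- x\<^sup>2 / 4)" for x
    by (simp add: normal_density_def real_sqrt_mult)
  from integrableD(2)[OF i] show ?thesis by (simp add: eq less_top)
qed

lemma gauss_le: "exp (K * norm p) * exp (- (norm p)\<^sup>2 / 2) \<le> exp (K\<^sup>2) * exp (- (norm p)\<^sup>2 / 4)" for p :: "'a::real_normed_vector"
proof -
  have "K * norm p + - (norm p)\<^sup>2 / 2 \<le> K\<^sup>2 + - (norm p)\<^sup>2 / 4"
    using sum_power2_ge_zero[of "norm p / 2 - K" 0]
    by (simp add: power2_eq_square algebra_simps) 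
  then show ?thesis unfolding mult_exp_exp exp_le_cancel_iff .
qed

lemma gauss_prod: "exp (- (norm p)\<^sup>2 / 4) = (\<Prod>b\<in>Basis. exp (- (p \<bullet> b)\<^sup>2 / 4))" for p :: "'a::euclidean_space"
proof -
  have "(norm p)\<^sup>2 = (\<Sum>b\<in>Basis. (p \<bullet> b)\<^sup>2)"
    unfolding power2_norm_eq_inner by (subst euclidean_inner) (simp add: power2_eq_square)
  then have "- (norm p)\<^sup>2 / 4 = (\<Sum>b\<in>Basis. - (p \<bullet> b)\<^sup>2 / 4)"
    by (simp add: sum_divide_distrib sum_negf)
  then show ?thesis by (simp add: exp_sum)
qed

lemma gauss_finite:
  fixes K :: real
  shows "(\<integral>\<^sup>+(p::'a::euclidean_space). ennreal (exp (K * norm p) * exp (- (norm p)\<^sup>2 / 2)) \<partial>lborel) < \<infinity>"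
proof -
  have "(\<integral>\<^sup>+(p::'a). ennreal (exp (K * norm p) * exp (- (norm p)\<^sup>2 / 2)) \<partial>lborel)
      \<le> (\<integral>\<^sup>+(p::'a). ennreal (exp (K\<^sup>2)) * (\<Prod>b\<in>Basis. ennreal (exp (- (p \<bullet> b)\<^sup>2 / 4))) \<partial>lborel)"
  proof (intro nn_integral_mono)
    fix p :: 'a
    have "ennreal (exp (K * norm p) * exp (- (norm p)\<^sup>2 / 2)) \<le> ennreal (exp (K\<^sup>2) * exp (- (norm p)\<^sup>2 / 4))"
      by (rule ennreal_leI[OF gauss_le])
    also have "\<dots> = ennreal (exp (K\<^sup>2)) * (\<Prod>b\<in>Basis. ennreal (exp (- (p \<bullet> b)\<^sup>2 / 4)))"
      unfolding gauss_prod[of p] by (simp add: ennreal_mult' prod_ennreal)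
    finally show "ennreal (exp (K * norm p) * exp (- (norm p)\<^sup>2 / 2)) \<le> ennreal (exp (K\<^sup>2)) * (\<Prod>b\<in>Basis. ennreal (exp (- (p \<bullet> b)\<^sup>2 / 4)))" .
  qed
  also have "\<dots> = ennreal (exp (K\<^sup>2)) * (\<integral>\<^sup>+(p::'a). (\<Prod>b\<in>Basis. ennreal (exp (- (p \<bullet> b)\<^sup>2 / 4))) \<partial>lborel)"
    by (rule nn_integral_cmult) measurable
  also have "\<dots> < \<infinity>"
  proof -
    have "(\<integral>\<^sup>+(p::'a). (\<Prod>b\<in>Basis. ennreal (exp (- (p \<bullet> b)\<^sup>2 / 4))) \<partial>lborel) = (\<Prod>b\<in>(Basis::'a set). (\<integral>\<^sup>+x. ennreal (exp (- x\<^sup>2 / 4)) \<partial>lborel))"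
      by (rule nn_integral_lborel_prod[where f="\<lambda>b x. ennreal (exp (- x\<^sup>2 / 4))"]) auto
    also have "\<dots> < \<infinity>"
      using gauss1_finite by (simp add: power_less_top_ennreal)
    finally show ?thesis by (simp add: ennreal_mult_less_top)
  qed
  finally show ?thesis .
qed

lemma Q_point:
  fixes F :: "'a::euclidean_space \<Rightarrow> 'a"
  assumes M: "(\<integral>\<^sup>+p. ennreal (exp (K * norm (p::'a)) * exp (- (norm p)\<^sup>2 / 2)) \<partial>lborel) = ennreal M"
    and b: "\<And>p. norm (F p) \<le> E + K * norm p"
  shows "(\<integral>\<^sup>+p. ennreal (Vfun 1 (F p) * exp (- (norm p)\<^sup>2 / 2)) \<partial>lborel) \<le> ennreal (exp E * M)"
proof -
  have "(\<integral>\<^sup>+p. ennreal (Vfun 1 (F p) * exp (- (norm p)\<^sup>2 / 2)) \<partial>lborel)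
     \<le> (\<integral>\<^sup>+p. ennreal (exp E) * ennreal (exp (K * norm (p::'a)) * exp (- (norm p)\<^sup>2 / 2)) \<partial>lborel)"
  proof (intro nn_integral_mono)
    fix p :: 'a
    have "exp (norm (F p)) \<le> exp E * exp (K * norm p)"
      using b[of p] by (simp add: exp_add[symmetric])
    then have "exp (norm (F p)) * exp (- (norm p)\<^sup>2 / 2) \<le> exp E * exp (K * norm p) * exp (- (norm p)\<^sup>2 / 2)"
      by (intro mult_right_mono) auto
    then show "ennreal (Vfun 1 (F p) * exp (- (norm p)\<^sup>2 / 2)) \<le> ennreal (exp E) * ennreal (exp (K * norm (p::'a)) * exp (- (norm p)\<^sup>2 / 2))"
      by (simp add: Vfun_def ennreal_mult'[symmetric] mult.assoc)
  qed
  also have "\<dots> = ennreal (exp E) * (\<integral>\<^sup>+p. ennreal (exp (K * norm (p::'a)) * exp (- (norm p)\<^sup>2 / 2)) \<partial>lborel)"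
    by (rule nn_integral_cmult) auto
  also have "\<dots> = ennreal (exp E) * ennreal M"
    by (simp only: M)
  finally show ?thesis by (simp add: ennreal_mult')
qed

lemma Q_abstract:
  fixes F :: "'a::euclidean_space \<Rightarrow> 'a \<Rightarrow> 'a"
  assumes K: "K \<ge> 0" and crude: "\<And>q p. norm (F q p) \<le> K0 + K * norm q + K * norm p"
    and contr: "\<And>C. \<exists>R. \<forall>q p. norm q \<ge> R \<longrightarrow> norm (F q p) \<le> norm q - C + K * norm p"
  shows "\<exists>lam b. 0 \<le> lam \<and> lam < 1 \<and> 0 \<le> b \<and> (\<forall>q. ennreal ((2 * pi) powr (- real DIM('a) / 2)) *
     (\<integral>\<^sup>+ p. ennreal (Vfun 1 (F q p) * exp (- (norm p)\<^sup>2 / 2)) \<partial>lborel) \<le> ennreal (lam * Vfun 1 q + b))"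
proof -
  define cd where "cd = (2 * pi) powr (- real DIM('a) / 2)"
  have cd: "cd > 0" unfolding cd_def by simp
  obtain M where M: "(\<integral>\<^sup>+p. ennreal (exp (K * norm (p::'a)) * exp (- (norm p)\<^sup>2 / 2)) \<partial>lborel) = ennreal M" and M0: "M \<ge> 0"
    using gauss_finite[of K, where 'a='a] by (auto simp: less_top_ennreal)
  define C where "C = ln (2 * cd * M + 1)"
  have eC: "cd * M * exp (- C) \<le> 1/2"
  proof -
    have pos: "0 < 2 * cd * M + 1" using cd M0 by (metis add_pos_nonneg zero_less_one mult_nonneg_nonneg less_imp_le zero_le_numeral add.commute)
    have "exp (- C) = 1 / (2 * cd * M + 1)" unfolding C_def using pos
      by (simp add: exp_minus inverse_eq_divide)
    then have "cd * M * exp (- C) = (cd * M) / (2 * cd * M + 1)" by simp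
    also have "\<dots> \<le> 1/2" using pos by (simp add: divide_le_eq)
    finally show ?thesis .
  qed
  obtain R where R: "\<And>q p. norm q \<ge> R \<Longrightarrow> norm (F q p) \<le> norm q - C + K * norm p"
    using contr[of C] by blast
  define b where "b = cd * (exp (K0 + K * \<bar>R\<bar>) * M)"
  have b0: "b \<ge> 0" unfolding b_def using cd M0 by simp
  have main: "ennreal cd * (\<integral>\<^sup>+ p. ennreal (Vfun 1 (F q p) * exp (- (norm p)\<^sup>2 / 2)) \<partial>lborel) \<le> ennreal (1/2 * Vfun 1 q + b)" for q
  proof -
    show "ennreal cd * (\<integral>\<^sup>+ p. ennreal (Vfun 1 (F q p) * exp (- (norm p)\<^sup>2 / 2)) \<partial>lborel) \<le> ennreal (1/2 * Vfun 1 q + b)"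
    proof (cases "norm q \<ge> R")
      case True
      have "ennreal cd * (\<integral>\<^sup>+ p. ennreal (Vfun 1 (F q p) * exp (- (norm p)\<^sup>2 / 2)) \<partial>lborel)
           \<le> ennreal cd * ennreal (exp (norm q - C) * M)"
        by (intro mult_left_mono Q_point[OF M]) (use R[OF True] in auto)
      also have "\<dots> = ennreal ((cd * M * exp (- C)) * exp (norm q))"
        using cd by (simp add: ennreal_mult'[symmetric] exp_diff exp_minus field_simps)
      also have "\<dots> \<le> ennreal (1/2 * Vfun 1 q + b)"
        using eC b0 by (intro ennreal_leI) (auto simp: Vfun_def intro!: mult_right_mono order.trans[OF _ add_increasing2[OF b0 order.refl]])
      finally show ?thesis .
    next
      case False
      have "ennreal cd * (\<integral>\<^sup>+ p. ennreal (Vfun 1 (F q p) * exp (- (norm p)\<^sup>2 / 2)) \<partial>lborel)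
           \<le> ennreal cd * ennreal (exp (K0 + K * \<bar>R\<bar>) * M)"
      proof (intro mult_left_mono Q_point[OF M])
        fix p
        have "K * norm q \<le> K * \<bar>R\<bar>" using False K by (intro mult_left_mono) auto
        then show "norm (F q p) \<le> K0 + K * \<bar>R\<bar> + K * norm p" using crude[of q p] by linarith
      qed auto
      also have "\<dots> = ennreal b" unfolding b_def using cd by (simp add: ennreal_mult'[symmetric])
      also have "\<dots> \<le> ennreal (1/2 * Vfun 1 q + b)"
        by (intro ennreal_leI) (simp add: Vfun_def)
      finally show ?thesis .
    qed
  qed
  show ?thesis using main b0 unfolding cd_def by (intro exI[of _ "1/2"] exI[of _ b]) auto
qed
lemma leapfrog_step:
  "leapfrog g h (q, p) = (q + h *\<^sub>R p - (h*h/2) *\<^sub>R g q,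
      p - (h/2) *\<^sub>R (g q + g (q + h *\<^sub>R p - (h*h/2) *\<^sub>R g q)))"
  by (simp add: leapfrog_def psi1_def psi2_def algebra_simps)

lemma lip_on:
  fixes g :: "'a::euclidean_space \<Rightarrow> 'a"
  assumes hess: "\<And>q. (g has_derivative blinfun_apply (D2 q)) (at q)"
    and S: "convex S" and L: "\<And>z. z \<in> S \<Longrightarrow> norm (D2 z) \<le> L" and x: "x \<in> S" and y: "y \<in> S"
  shows "norm (g x - g y) \<le> L * norm (x - y)"
  by (rule differentiable_bound[OF S _ _ x y])
     (auto intro: has_derivative_at_withinI[OF hess] simp: L norm_blinfun.rep_eq[symmetric])

lemma D2_global:
  assumes bound2: "\<And>q. norm (D2 q) \<le> A1 * (norm q + 1) powr (m - 2)" and "m \<le> 2" "A1 \<ge> 0"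
  shows "norm (D2 q) \<le> A1"
proof -
  have "(norm q + 1) powr (m - 2) \<le> 1 powr (m-2)"
    by (rule powr_mono2') (use assms in auto)
  then have "A1 * (norm q + 1) powr (m - 2) \<le> A1" using assms by (simp add: mult_left_le)
  then show ?thesis using bound2[of q] by linarith
qed

lemma D2_local:
  fixes q z :: "'a::euclidean_space"
  assumes bound2: "\<And>q. norm (D2 q) \<le> A1 * (norm q + 1) powr (m - 2)" and "m \<le> 2" "A1 \<ge> 0"
    and z: "z \<in> cball q (norm q / 2)"
  shows "norm (D2 z) \<le> A1 * (norm q / 2 + 1) powr (m - 2)"
proof -
  have "norm q / 2 \<le> norm z" using z norm_triangle_ineq2[of q z]
    by (auto simp: dist_norm norm_minus_commute)
  moreover have "0 < norm q / 2 + 1" using norm_ge_zero[of q] by linarith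
  ultimately have "(norm z + 1) powr (m - 2) \<le> (norm q / 2 + 1) powr (m-2)"
    by (intro powr_mono2') (use assms in auto)
  then have "A1 * (norm z + 1) powr (m - 2) \<le> A1 * (norm q / 2 + 1) powr (m-2)"
    using assms by (simp add: mult_left_mono)
  then show ?thesis using bound2[of z] by linarith
qed

lemma grad_bound:
  fixes g :: "'a::euclidean_space \<Rightarrow> 'a"
  assumes hess: "\<And>q. (g has_derivative blinfun_apply (D2 q)) (at q)"
    and bound2: "\<And>q. norm (D2 q) \<le> A1 * (norm q + 1) powr (m - 2)" and m: "1 < m" "m \<le> 2" and A1: "A1 \<ge> 0"
  shows "norm (g q) \<le> norm (g 0) + A1 / (m - 1) * (norm q + 1) powr (m - 1)"
proof -
  define v where "v = sgn (g q)"
  define r where "r = norm q"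
  define F where "F = (\<lambda>t. g (t *\<^sub>R q) \<bullet> v - A1 / (m - 1) * (t * r + 1) powr (m - 1))"
  have "F 1 \<le> F 0"
  proof (rule DERIV_nonpos_imp_nonincreasing[of 0 1 F])
    fix t :: real assume t: "0 \<le> t" "t \<le> 1"
    have pos: "0 < t * r + 1" using t by (simp add: r_def add_nonneg_pos)
    have d1: "((\<lambda>t. g (t *\<^sub>R q)) has_derivative (\<lambda>s. blinfun_apply (D2 (t *\<^sub>R q)) (s *\<^sub>R q))) (at t)"
      by (rule has_derivative_compose[OF _ hess]) (auto intro!: derivative_eq_intros)
    have d2: "((\<lambda>t. g (t *\<^sub>R q) \<bullet> v) has_real_derivative (blinfun_apply (D2 (t *\<^sub>R q)) q \<bullet> v)) (at t)"
    proof -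
      have e: "(\<lambda>x. x * (blinfun_apply (D2 (t *\<^sub>R q)) q \<bullet> v)) = (*) (blinfun_apply (D2 (t *\<^sub>R q)) q \<bullet> v)"
        by (auto simp: mult.commute)
      show ?thesis
      unfolding has_field_derivative_def
      using has_derivative_inner_left[OF d1, of v]
      by (simp add: blinfun.scaleR_right e)
    qed
    have d3: "((\<lambda>t. A1 / (m - 1) * (t * r + 1) powr (m - 1)) has_real_derivative
               A1 / (m - 1) * ((m - 1) * (t * r + 1) powr (m - 1 - 1) * r)) (at t)"
      using pos by (auto intro!: derivative_eq_intros)
    have "blinfun_apply (D2 (t *\<^sub>R q)) q \<bullet> v \<le> norm (blinfun_apply (D2 (t *\<^sub>R q)) q) * norm v"
      by (rule norm_cauchy_schwarz)
    also have "\<dots> \<le> norm (D2 (t *\<^sub>R q)) * norm q * 1"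
      by (intro mult_mono norm_blinfun) (auto simp: v_def norm_sgn)
    also have "\<dots> \<le> A1 * (t * r + 1) powr (m - 2) * r"
      using bound2[of "t *\<^sub>R q"] t by (simp add: r_def mult_right_mono)
    finally have le: "blinfun_apply (D2 (t *\<^sub>R q)) q \<bullet> v \<le> A1 * (t * r + 1) powr (m - 2) * r" .
    have eq: "A1 / (m - 1) * ((m - 1) * (t * r + 1) powr (m - 1 - 1) * r) = A1 * (t * r + 1) powr (m - 2) * r"
      using m by (simp add: field_simps)
    show "\<exists>y. (F has_real_derivative y) (at t) \<and> y \<le> 0"
    proof (intro exI conjI)
      show "(F has_real_derivative (blinfun_apply (D2 (t *\<^sub>R q)) q \<bullet> v - A1 / (m - 1) * ((m - 1) * (t * r + 1) powr (m - 1 - 1) * r))) (at t)"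
        unfolding F_def by (rule DERIV_diff[OF d2 d3])
    qed (use le eq in simp)
  qed simp
  moreover have gv: "g q \<bullet> v = norm (g q)"
    by (cases "g q = 0") (simp_all add: v_def sgn_div_norm dot_square_norm power2_eq_square)
  ultimately have "norm (g q) - A1 / (m - 1) * (r + 1) powr (m - 1) \<le> g 0 \<bullet> v - A1 / (m - 1)"
    by (simp add: F_def)
  moreover have "g 0 \<bullet> v \<le> norm (g 0)"
    using norm_cauchy_schwarz[of "g 0" v] by (auto simp: v_def norm_sgn split: if_splits)
  moreover have "A1 / (m - 1) \<ge> 0" using m A1 by simp
  ultimately show ?thesis by (simp add: r_def)
qed

lemma traj:
  fixes g :: "'a::real_normed_vector \<Rightarrow> 'a"
  assumes h: "h > 0" and L: "L \<ge> 0"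
    and c: "c = (real T)\<^sup>2 * h\<^sup>2 / 2" and cL: "c * L \<le> 1/2"
    and Sig: "\<Sigma> = 2 * (real T * h * norm p + c * norm (g q))"
    and lip: "\<And>x. norm (x - q) \<le> \<Sigma> \<Longrightarrow> norm (g x - g q) \<le> L * norm (x - q)"
  shows "norm (leapfrog_q g h T q p - (q + (real T * h) *\<^sub>R p - c *\<^sub>R g q)) \<le> c * L * \<Sigma>"
proof -
  define X where "X k = (leapfrog g h ^^ k) (q, p)" for k
  define qs where "qs k = fst (X k)" for k
  define ps where "ps k = snd (X k)" for k
  define G where "G = g q"
  define \<delta> where "\<delta> = L * \<Sigma>"
  have c0: "c \<ge> 0" unfolding c by simp
  have Sig0: "\<Sigma> \<ge> 0" unfolding Sig using c0 h by simp
  have d0: "\<delta> \<ge> 0" using L Sig0 by (simp add: \<delta>_def)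
  have Xs: "X (Suc k) = leapfrog g h (qs k, ps k)" for k
    by (simp add: X_def qs_def ps_def)
  have qsS: "qs (Suc k) = qs k + h *\<^sub>R ps k - (h*h/2) *\<^sub>R g (qs k)" for k
    by (simp add: qs_def[of "Suc k"] Xs leapfrog_step)
  have psS: "ps (Suc k) = ps k - (h/2) *\<^sub>R (g (qs k) + g (qs (Suc k)))" for k
    by (simp add: ps_def[of "Suc k"] Xs leapfrog_step qsS)
  have gl: "norm (g x - G) \<le> \<delta>" if "norm (x - q) \<le> \<Sigma>" for x
  proof -
    have "norm (g x - G) \<le> L * norm (x - q)" using lip[OF that] by (simp add: G_def)
    also have "\<dots> \<le> L * \<Sigma>" using that L by (simp add: mult_left_mono)
    finally show ?thesis by (simp add: \<delta>_def)
  qed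
  have ck: "(real k)\<^sup>2 * h\<^sup>2 / 2 \<le> c" if "k \<le> T" for k
    using that h by (simp add: c power_mono mult_right_mono)
  have main: "k \<le> T \<Longrightarrow> (\<forall>j\<le>k. norm (qs j - q) \<le> \<Sigma>) \<and>
      norm (qs k - (q + (real k * h) *\<^sub>R p - ((real k)\<^sup>2 * h\<^sup>2 / 2) *\<^sub>R G)) \<le> (real k)\<^sup>2 * h\<^sup>2 / 2 * \<delta> \<and>
      norm (ps k - (p - (real k * h) *\<^sub>R G)) \<le> real k * h * \<delta>" for k
  proof (induction k)
    case 0
    then show ?case using Sig0 by (simp add: qs_def ps_def X_def)
  next
    case (Suc k)
    then have IH: "\<forall>j\<le>k. norm (qs j - q) \<le> \<Sigma>"
       "norm (qs k - (q + (real k * h) *\<^sub>R p - ((real k)\<^sup>2 * h\<^sup>2 / 2) *\<^sub>R G)) \<le> (real k)\<^sup>2 * h\<^sup>2 / 2 * \<delta>"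
       "norm (ps k - (p - (real k * h) *\<^sub>R G)) \<le> real k * h * \<delta>" by auto
    define e where "e = qs k - (q + (real k * h) *\<^sub>R p - ((real k)\<^sup>2 * h\<^sup>2 / 2) *\<^sub>R G)"
    define f where "f = ps k - (p - (real k * h) *\<^sub>R G)"
    have gk: "norm (g (qs k) - G) \<le> \<delta>" using IH(1) gl by auto
    have eS: "qs (Suc k) - (q + (real (Suc k) * h) *\<^sub>R p - ((real (Suc k))\<^sup>2 * h\<^sup>2 / 2) *\<^sub>R G)
        = e + h *\<^sub>R f - (h*h/2) *\<^sub>R (g (qs k) - G)"
      unfolding qsS e_def f_def
      apply (simp add: algebra_simps power2_eq_square)
      apply (simp only: scaleR_add_left[symmetric])
      apply (rule arg_cong[where f="\<lambda>x. x *\<^sub>R G"])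
      apply (simp add: field_simps)
      done
    have "norm (e + h *\<^sub>R f - (h*h/2) *\<^sub>R (g (qs k) - G)) \<le> norm e + h * norm f + (h*h/2) * norm (g (qs k) - G)"
      using h norm_triangle_ineq4[of "e + h *\<^sub>R f" "(h*h/2) *\<^sub>R (g (qs k) - G)"] norm_triangle_ineq[of e "h *\<^sub>R f"]
      by simp
    also have "\<dots> \<le> (real k)\<^sup>2 * h\<^sup>2 / 2 * \<delta> + h * (real k * h * \<delta>) + (h*h/2) * \<delta>"
      using IH(2,3) gk h unfolding e_def[symmetric] f_def[symmetric]
      by (intro add_mono mult_left_mono) auto
    also have "\<dots> = (real (Suc k))\<^sup>2 * h\<^sup>2 / 2 * \<delta>"
      by (simp add: algebra_simps power2_eq_square)
    finally have E: "norm (qs (Suc k) - (q + (real (Suc k) * h) *\<^sub>R p - ((real (Suc k))\<^sup>2 * h\<^sup>2 / 2) *\<^sub>R G))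
        \<le> (real (Suc k))\<^sup>2 * h\<^sup>2 / 2 * \<delta>" unfolding eS .
    have ckS: "(real (Suc k))\<^sup>2 * h\<^sup>2 / 2 \<le> c" using ck Suc.prems by blast
    have hk: "real (Suc k) * h \<le> real T * h" using Suc.prems h by simp
    have qk1: "norm (qs (Suc k) - q) \<le> \<Sigma>"
    proof -
      have "norm (qs (Suc k) - q) \<le> norm ((real (Suc k) * h) *\<^sub>R p - ((real (Suc k))\<^sup>2 * h\<^sup>2 / 2) *\<^sub>R G)
           + norm (qs (Suc k) - (q + (real (Suc k) * h) *\<^sub>R p - ((real (Suc k))\<^sup>2 * h\<^sup>2 / 2) *\<^sub>R G))"
        using norm_triangle_ineq[of "(real (Suc k) * h) *\<^sub>R p - ((real (Suc k))\<^sup>2 * h\<^sup>2 / 2) *\<^sub>R G"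
            "qs (Suc k) - (q + (real (Suc k) * h) *\<^sub>R p - ((real (Suc k))\<^sup>2 * h\<^sup>2 / 2) *\<^sub>R G)"]
        by (simp add: algebra_simps)
      also have "\<dots> \<le> (real (Suc k) * h) * norm p + ((real (Suc k))\<^sup>2 * h\<^sup>2 / 2) * norm G + c * \<delta>"
        using norm_triangle_ineq4[of "(real (Suc k) * h) *\<^sub>R p" "((real (Suc k))\<^sup>2 * h\<^sup>2 / 2) *\<^sub>R G"]
          E ckS d0 h mult_right_mono[OF ckS d0]
        by (simp add: abs_mult)
      also have "\<dots> \<le> real T * h * norm p + c * norm G + c * \<delta>"
        by (intro add_mono mult_right_mono hk ckS) (use d0 in auto)
      also have "\<dots> \<le> \<Sigma>"
        using cL Sig0 mult_right_mono[OF cL Sig0] unfolding Sig G_def[symmetric] \<delta>_def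
        by (simp add: algebra_simps)
      finally show ?thesis .
    qed
    have gk1: "norm (g (qs (Suc k)) - G) \<le> \<delta>" using gl qk1 by auto
    have fS: "ps (Suc k) - (p - (real (Suc k) * h) *\<^sub>R G) = f - (h/2) *\<^sub>R ((g (qs k) - G) + (g (qs (Suc k)) - G))"
      unfolding psS f_def by (simp add: algebra_simps) (simp only: scaleR_add_left[symmetric] field_sum_of_halves)
    have "norm (f - (h/2) *\<^sub>R ((g (qs k) - G) + (g (qs (Suc k)) - G))) \<le> norm f + (h/2) * (norm (g (qs k) - G) + norm (g (qs (Suc k)) - G))"
    proof -
      have a: "(h/2) * norm ((g (qs k) - G) + (g (qs (Suc k)) - G)) \<le> (h/2) * (norm (g (qs k) - G) + norm (g (qs (Suc k)) - G))"
        using h norm_triangle_ineq[of "g (qs k) - G" "g (qs (Suc k)) - G"] by (intro mult_left_mono) auto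
      have b: "norm ((h/2) *\<^sub>R ((g (qs k) - G) + (g (qs (Suc k)) - G))) = (h/2) * norm ((g (qs k) - G) + (g (qs (Suc k)) - G))"
        using h by simp
      show ?thesis using norm_triangle_ineq4[of f "(h/2) *\<^sub>R ((g (qs k) - G) + (g (qs (Suc k)) - G))"] a b
        by linarith
    qed
    also have "\<dots> \<le> real k * h * \<delta> + (h/2) * (\<delta> + \<delta>)"
      using IH(3) gk gk1 h unfolding f_def[symmetric]
      by (intro add_mono mult_left_mono) auto
    also have "\<dots> = real (Suc k) * h * \<delta>" by (simp add: algebra_simps)
    finally have F: "norm (ps (Suc k) - (p - (real (Suc k) * h) *\<^sub>R G)) \<le> real (Suc k) * h * \<delta>" unfolding fS .
    have "\<forall>j\<le>Suc k. norm (qs j - q) \<le> \<Sigma>" using IH(1) qk1 le_Suc_eq by auto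
    then show ?case using E F by blast
  qed
  from main[of T] have "norm (qs T - (q + (real T * h) *\<^sub>R p - ((real T)\<^sup>2 * h\<^sup>2 / 2) *\<^sub>R G)) \<le> (real T)\<^sup>2 * h\<^sup>2 / 2 * \<delta>"
    by blast
  then show ?thesis unfolding c[symmetric] \<delta>_def G_def qs_def X_def leapfrog_q_def by (simp add: mult.assoc)
qed

lemma crude:
  fixes g :: "'a::real_normed_vector \<Rightarrow> 'a"
  assumes lg: "\<And>x. norm (g x) \<le> B0 + A * norm x" and A: "A \<ge> 0" and B0: "B0 \<ge> 0" and h: "h > 0"
  shows "\<exists>K0\<ge>0. \<forall>q p. norm (leapfrog_q g h T q p) \<le> K0 * (norm q + norm p + 1)"
proof -
  define \<alpha>1 where "\<alpha>1 = 1 + h + (h*h/2) * (B0 + A)"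
  define \<alpha>2 where "\<alpha>2 = 1 + (h/2) * (2*B0 + A + A*\<alpha>1)"
  define \<gamma> where "\<gamma> = \<alpha>1 + \<alpha>2 + 1"
  have a1: "\<alpha>1 \<ge> 0" "\<alpha>2 \<ge> 0" using h A B0 by (simp_all add: \<alpha>1_def \<alpha>2_def)
  have g0: "\<gamma> \<ge> 0" using a1 by (simp add: \<gamma>_def)
  have step: "norm (fst (leapfrog g h (q, p))) + norm (snd (leapfrog g h (q, p))) + 1 \<le> \<gamma> * (norm q + norm p + 1)" for q p
  proof -
    define N where "N = norm q + norm p + 1"
    have N1: "N \<ge> 1" by (simp add: N_def)
    define q' where "q' = q + h *\<^sub>R p - (h*h/2) *\<^sub>R g q"
    have BN: "B0 \<le> B0 * N" using B0 N1 mult_left_mono[of 1 N B0] by simp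
    have gq: "norm (g q) \<le> B0 * N + A * N"
      using lg[of q] BN mult_left_mono[of "norm q" N A] A by (simp add: N_def)
    have "norm q' \<le> norm q + h * norm p + (h*h/2) * norm (g q)"
      unfolding q'_def using h norm_triangle_ineq4[of "q + h *\<^sub>R p" "(h*h/2) *\<^sub>R g q"] norm_triangle_ineq[of q "h *\<^sub>R p"]
      by simp
    also have "\<dots> \<le> N + h * N + (h*h/2) * (B0 * N + A * N)"
      using h gq by (intro add_mono mult_left_mono) (auto simp: N_def)
    also have "\<dots> = \<alpha>1 * N" by (simp add: \<alpha>1_def algebra_simps)
    finally have q1: "norm q' \<le> \<alpha>1 * N" .
    have gq': "norm (g q') \<le> B0 * N + A * (\<alpha>1 * N)"
      using lg[of q'] BN mult_left_mono[OF q1 A] by simp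
    have "norm (p - (h/2) *\<^sub>R (g q + g q')) \<le> norm p + (h/2) * (norm (g q) + norm (g q'))"
    proof -
      have "norm ((h/2) *\<^sub>R (g q + g q')) \<le> (h/2) * (norm (g q) + norm (g q'))"
        using h norm_triangle_ineq[of "g q" "g q'"] by (simp add: mult_left_mono)
      then show ?thesis using norm_triangle_ineq4[of p "(h/2) *\<^sub>R (g q + g q')"] by linarith
    qed
    also have "\<dots> \<le> N + (h/2) * ((B0 * N + A * N) + (B0 * N + A * (\<alpha>1 * N)))"
      using h gq gq' by (intro add_mono mult_left_mono) (auto simp: N_def)
    also have "\<dots> = \<alpha>2 * N" by (simp add: \<alpha>2_def algebra_simps)
    finally have p1: "norm (p - (h/2) *\<^sub>R (g q + g q')) \<le> \<alpha>2 * N" .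
    show ?thesis using q1 p1 N1 unfolding leapfrog_step q'_def[symmetric] \<gamma>_def N_def[symmetric]
      by (simp add: algebra_simps)
  qed
  have ind: "norm (fst ((leapfrog g h ^^ k) (q, p))) + norm (snd ((leapfrog g h ^^ k) (q, p))) + 1 \<le> \<gamma> ^ k * (norm q + norm p + 1)" for k q p
  proof (induction k)
    case (Suc k)
    obtain a b where ab: "(leapfrog g h ^^ k) (q, p) = (a, b)" by fastforce
    have "norm (fst ((leapfrog g h ^^ Suc k) (q, p))) + norm (snd ((leapfrog g h ^^ Suc k) (q, p))) + 1
        \<le> \<gamma> * (norm a + norm b + 1)" using step[of a b] by (simp add: ab)
    also have "\<dots> \<le> \<gamma> * (\<gamma> ^ k * (norm q + norm p + 1))" using Suc g0 by (intro mult_left_mono) (auto simp: ab)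
    finally show ?case by (simp add: mult.assoc)
  qed simp
  show ?thesis
  proof (intro exI[of _ "\<gamma> ^ T"] conjI allI)
    fix q p
    show "norm (leapfrog_q g h T q p) \<le> \<gamma> ^ T * (norm q + norm p + 1)"
      using ind[of T q p] norm_ge_zero[of "snd ((leapfrog g h ^^ T) (q, p))"] unfolding leapfrog_q_def by linarith
  qed (use g0 in simp)
qed

lemma sq_expand:
  fixes q G :: "'a::real_inner"
  shows "(norm (q - c *\<^sub>R G))\<^sup>2 = (norm q)\<^sup>2 - 2 * c * (G \<bullet> q) + c\<^sup>2 * (norm G)\<^sup>2"
  unfolding power2_norm_eq_inner by (simp add: inner_diff_left inner_diff_right inner_commute algebra_simps power2_eq_square)

lemma qT_bound:
  fixes g :: "'a::real_normed_vector \<Rightarrow> 'a"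
  assumes h: "h > 0" and L: "L \<ge> 0"
    and c: "c = (real T)\<^sup>2 * h\<^sup>2 / 2" and cL: "c * L \<le> 1/2"
    and lip: "\<And>x. norm (x - q) \<le> 2 * (real T * h * norm p + c * norm (g q)) \<Longrightarrow> norm (g x - g q) \<le> L * norm (x - q)"
  shows "norm (leapfrog_q g h T q p) \<le> norm (q - c *\<^sub>R g q) + real T * h * (1 + 2 * c * L) * norm p + 2 * c * c * L * norm (g q)"
proof -
  have t: "norm (leapfrog_q g h T q p - (q + (real T * h) *\<^sub>R p - c *\<^sub>R g q)) \<le> c * L * (2 * (real T * h * norm p + c * norm (g q)))"
    by (rule traj[OF h L c cL refl lip])
  have "norm (leapfrog_q g h T q p) \<le> norm (q - c *\<^sub>R g q) + norm ((real T * h) *\<^sub>R p) + norm (leapfrog_q g h T q p - (q + (real T * h) *\<^sub>R p - c *\<^sub>R g q))"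
    using norm_triangle_ineq[of "q - c *\<^sub>R g q" "(real T * h) *\<^sub>R p"]
      norm_triangle_ineq[of "(q - c *\<^sub>R g q) + (real T * h) *\<^sub>R p" "leapfrog_q g h T q p - (q + (real T * h) *\<^sub>R p - c *\<^sub>R g q)"]
    by (simp add: algebra_simps)
  also have "norm ((real T * h) *\<^sub>R p) = real T * h * norm p" using h by simp
  finally show ?thesis using t by (simp add: algebra_simps)
qed

lemma contr_lt2:
  fixes g :: "'a::euclidean_space \<Rightarrow> 'a" and D2 :: "'a \<Rightarrow> ('a \<Rightarrow>\<^sub>L 'a)"
  assumes hess: "\<And>q. (g has_derivative blinfun_apply (D2 q)) (at q)"
    and bound2: "\<And>q. norm (D2 q) \<le> A1 * (norm q + 1) powr (m - 2)"
    and m: "1 < m" "m < 2" and A1: "A1 \<ge> 0" and A3: "A3 > 0"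
    and drift: "\<And>q. g q \<bullet> q \<ge> A3 * norm q powr m - A4"
    and gb: "\<And>q. norm (g q) \<le> B * (norm q + 1) powr (m - 1)" and B: "B \<ge> 0"
    and h: "h > 0" and T: "T \<ge> 1"
    and crude: "\<And>q p. norm (leapfrog_q g h T q p) \<le> K0 * (norm q + norm p + 1)" and K0: "K0 \<ge> 0"
  shows "\<exists>K\<ge>0. \<forall>C. \<exists>R. \<forall>q p. norm q \<ge> R \<longrightarrow> norm (leapfrog_q g h T q p) \<le> norm q - C + K * norm p"
proof -
  define c where "c = (real T)\<^sup>2 * h\<^sup>2 / 2"
  have c0: "c > 0" using T h by (simp add: c_def)
  have Th: "real T * h > 0" using T h by simp
  define \<epsilon> where "\<epsilon> = 1 / (8 * (real T * h))"
  have e0: "\<epsilon> > 0" using Th by (simp add: \<epsilon>_def)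
  define K where "K = max (real T * h * (1 + 2 * c * A1)) (K0 * (1/\<epsilon> + 1) + 1)"
  define A1p where "A1p = A1 + 1"
  define Bp where "Bp = B + 1"
  define A4p where "A4p = \<bar>A4\<bar> + 1"
  have pos: "A1p > 0" "Bp > 0" "A4p > 0" using A1 B by (auto simp: A1p_def Bp_def A4p_def)
  have K0': "K \<ge> 0"
  proof -
    have "K0 * (1/\<epsilon> + 1) + 1 \<ge> 0" using K0 e0 by (simp add: add_nonneg_nonneg)
    then show ?thesis unfolding K_def by (simp add: le_max_iff_disj)
  qed
  have "\<exists>R. \<forall>q p. norm q \<ge> R \<longrightarrow> norm (leapfrog_q g h T q p) \<le> norm q - C + K * norm p" for C
  proof -
    have ev: "eventually (\<lambda>r. c*(A1p*(r/2+1) powr (m-2)) \<le> 1/2 \<and> 2*c*Bp*(r+1) powr (m-1) \<le> r/4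
       \<and> 2*c*A4p + c^2*Bp^2*((r+1) powr (m-1))^2 \<le> c*A3*r powr m
       \<and> c*A3/2*r powr (m-1) \<le> r
       \<and> 2*c^2*A1p*Bp*(r/2+1) powr (m-2) * (r+1) powr (m-1) \<le> c*A3/4* r powr (m-1)
       \<and> C \<le> c*A3/4* r powr (m-1) \<and> (K0 + C) / \<epsilon> \<le> r \<and> 1 \<le> r) at_top"
      using m c0 pos A3 by (intro eventually_conj; real_asymp)+
    then obtain R where R: "\<And>r. r \<ge> R \<Longrightarrow> c*(A1p*(r/2+1) powr (m-2)) \<le> 1/2 \<and> 2*c*Bp*(r+1) powr (m-1) \<le> r/4
       \<and> 2*c*A4p + c^2*Bp^2*((r+1) powr (m-1))^2 \<le> c*A3*r powr m
       \<and> c*A3/2*r powr (m-1) \<le> r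
       \<and> 2*c^2*A1p*Bp*(r/2+1) powr (m-2) * (r+1) powr (m-1) \<le> c*A3/4* r powr (m-1)
       \<and> C \<le> c*A3/4* r powr (m-1) \<and> (K0 + C) / \<epsilon> \<le> r \<and> 1 \<le> r"
      unfolding eventually_at_top_linorder by blast
    show "\<exists>R. \<forall>q p. norm q \<ge> R \<longrightarrow> norm (leapfrog_q g h T q p) \<le> norm q - C + K * norm p"
    proof (intro exI[of _ R] allI impI)
      fix q p :: 'a assume qR: "norm q \<ge> R"
      define r where "r = norm q"
      note RR = R[OF qR, folded r_def]
      have r1: "r \<ge> 1" using RR by simp
      show "norm (leapfrog_q g h T q p) \<le> norm q - C + K * norm p"
      proof (cases "norm p \<le> \<epsilon> * r")
        case False
        have pr: "r \<le> norm p / \<epsilon>" using False e0 by (simp add: field_simps)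
        have pC: "K0 + C \<le> norm p" using RR False e0
          by (metis (no_types, lifting) divide_le_eq less_le_not_le mult.commute nle_le order.trans)
        have "K0 * r \<le> K0 * (norm p / \<epsilon>)" by (rule mult_left_mono[OF pr K0])
        moreover have "(K0 * (1/\<epsilon> + 1) + 1) * norm p \<le> K * norm p" unfolding K_def
          by (intro mult_right_mono) auto
        moreover have "(K0 * (1/\<epsilon> + 1) + 1) * norm p = K0 * (norm p / \<epsilon>) + K0 * norm p + norm p"
          by (simp add: algebra_simps)
        ultimately show ?thesis using crude[of q p] pC r1 unfolding r_def[symmetric]
          by (simp add: algebra_simps)
      next
        case True
        define L where "L = A1 * (r/2+1) powr (m-2)"
        have L0: "L \<ge> 0" using A1 by (simp add: L_def)
        have pw: "(r/2+1) powr (m-2) \<le> 1"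
          using powr_mono2'[of "m-2" 1 "r/2+1"] m r1 by simp
        have LA: "L \<le> A1" unfolding L_def using mult_left_mono[OF pw A1] by simp
        have LA1p: "L \<le> A1p * (r/2+1) powr (m-2)" unfolding L_def A1p_def by (simp add: algebra_simps)
        have cL: "c * L \<le> 1/2" using RR mult_left_mono[OF LA1p, of c] c0 by linarith
        have pw1: "(r+1) powr (m-1) \<ge> 0" by simp
        have G: "norm (g q) \<le> Bp * (r+1) powr (m-1)"
          using gb[of q] mult_right_mono[of B Bp, OF _ pw1] by (simp add: Bp_def r_def)
        have Sig: "2 * (real T * h * norm p + c * norm (g q)) \<le> r/2"
        proof -
          have "real T * h * norm p \<le> real T * h * (\<epsilon> * r)" using True Th by (intro mult_left_mono) auto
          also have "\<dots> = r / 8" using Th h T by (simp add: \<epsilon>_def)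
          finally have a: "real T * h * norm p \<le> r / 8" .
          have "c * norm (g q) \<le> c * (Bp * (r+1) powr (m-1))" using G c0 by (intro mult_left_mono) auto
          then have b: "c * norm (g q) \<le> r / 8" using RR by simp
          show ?thesis using a b by simp
        qed
        have lip: "norm (g x - g q) \<le> L * norm (x - q)" if "norm (x - q) \<le> 2 * (real T * h * norm p + c * norm (g q))" for x
        proof -
          have xin: "x \<in> cball q (norm q / 2)" using that Sig by (simp add: dist_norm norm_minus_commute r_def)
          have S: "\<And>z. z \<in> cball q (norm q/2) \<Longrightarrow> norm (D2 z) \<le> A1 * (norm q/2+1) powr (m-2)"
            using D2_local[OF bound2 _ A1] m by auto
          show ?thesis unfolding L_def r_def
            by (rule lip_on[OF hess convex_cball S xin]) (auto simp: mem_cball)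
        qed
        have QB: "norm (leapfrog_q g h T q p) \<le> norm (q - c *\<^sub>R g q) + real T * h * (1 + 2 * c * L) * norm p + 2 * c * c * L * norm (g q)"
          by (rule qT_bound[OF h L0 c_def cL lip])
        have t2: "real T * h * (1 + 2 * c * L) * norm p \<le> K * norm p"
        proof -
          have "real T * h * (1 + 2 * c * L) \<le> real T * h * (1 + 2 * c * A1)"
            using Th c0 LA by (intro mult_left_mono) auto
          then show ?thesis unfolding K_def by (intro mult_right_mono) auto
        qed
        have t3: "2 * c * c * L * norm (g q) \<le> c*A3/4* r powr (m-1)"
        proof -
          have "2 * c * c * L * norm (g q) \<le> 2 * c * c * (A1p * (r/2+1) powr (m-2)) * (Bp * (r+1) powr (m-1))"
            using c0 L0 LA1p G by (intro mult_mono) auto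
          also have "\<dots> = 2*c^2*A1p*Bp*(r/2+1) powr (m-2) * (r+1) powr (m-1)" by (simp add: power2_eq_square)
          finally show ?thesis using RR by linarith
        qed
        have t1: "norm (q - c *\<^sub>R g q) \<le> r - c*A3/2*r powr (m-1)"
        proof (rule power2_le_imp_le)
          show "0 \<le> r - c*A3/2*r powr (m-1)" using RR by simp
          have "(norm (q - c *\<^sub>R g q))\<^sup>2 = r\<^sup>2 - 2 * c * (g q \<bullet> q) + c\<^sup>2 * (norm (g q))\<^sup>2"
            by (simp add: sq_expand r_def)
          also have "\<dots> \<le> r\<^sup>2 - 2 * c * (A3 * r powr m - A4) + c\<^sup>2 * (Bp * (r+1) powr (m-1))\<^sup>2"
            using drift[of q] c0 G by (intro add_mono diff_mono mult_left_mono power_mono) (auto simp: r_def)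
          also have "\<dots> \<le> r\<^sup>2 - c*A3*r powr m"
          proof -
            have "2 * c * A4 \<le> 2 * c * A4p" using c0 by (simp add: A4p_def)
            then show ?thesis using RR by (simp add: power_mult_distrib algebra_simps)
          qed
          also have "\<dots> \<le> (r - c*A3/2*r powr (m-1))\<^sup>2"
          proof -
            have e: "r powr (m-1) * r = r powr m" using r1 by (simp add: powr_mult_base mult.commute)
            have "(r - c*A3/2*r powr (m-1))\<^sup>2 = r\<^sup>2 - c*A3*(r powr (m-1) * r) + (c*A3/2*r powr (m-1))\<^sup>2"
              by (simp add: power2_eq_square algebra_simps)
            then show ?thesis unfolding e using zero_le_power2[of "c*A3/2*r powr (m-1)"] by linarith
          qed
          finally show "(norm (q - c *\<^sub>R g q))\<^sup>2 \<le> (r - c*A3/2*r powr (m-1))\<^sup>2" .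
        qed
        show ?thesis using QB t1 t2 t3 RR unfolding r_def[symmetric] by linarith
      qed
    qed
  qed
  then show ?thesis using K0' by blast
qed

lemma contr_2:
  fixes g :: "'a::real_inner \<Rightarrow> 'a"
  assumes lipG: "\<And>x y. norm (g x - g y) \<le> A1 * norm (x - y)" and A1: "A1 \<ge> 0" and A3: "A3 > 0"
    and drift: "\<And>q. g q \<bullet> q \<ge> A3 * (norm q)\<^sup>2 - A4"
    and gb: "\<And>q. norm (g q) \<le> B * (norm q + 1)" and B: "B \<ge> 0"
    and h: "h > 0" and T: "T \<ge> 1" and c: "c = (real T)\<^sup>2 * h\<^sup>2 / 2"
    and cA1: "c * A1 \<le> 1/2" and cB: "c * B\<^sup>2 \<le> A3 / 2" and cA3: "c * A3 \<le> 1" and cAB: "2 * c * A1 * B \<le> A3 / 4"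
  shows "\<exists>K\<ge>0. \<forall>C. \<exists>R. \<forall>q p. norm q \<ge> R \<longrightarrow> norm (leapfrog_q g h T q p) \<le> norm q - C + K * norm p"
proof -
  have c00: "c > 0" unfolding c using h T by simp
  then have c0: "c \<ge> 0" by simp
  define K where "K = real T * h * (1 + 2 * c * A1)"
  have K0: "K \<ge> 0" using h c0 A1 by (simp add: K_def)
  define D where "D = 2 * c * \<bar>A4\<bar> + 2 * c\<^sup>2 * B\<^sup>2"
  have D0: "D \<ge> 0" using c0 by (simp add: D_def)
  define E where "E = sqrt D + c * A3 / 4"
  have gen: "norm (leapfrog_q g h T q p) \<le> norm q - c * A3 / 4 * norm q + E + K * norm p" for q p
  proof -
    define r where "r = norm q"
    have r0: "r \<ge> 0" by (simp add: r_def)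
    have w: "0 \<le> (1 - c * A3 / 2) * r" using cA3 r0 by (intro mult_nonneg_nonneg) auto
    have QB: "norm (leapfrog_q g h T q p) \<le> norm (q - c *\<^sub>R g q) + real T * h * (1 + 2 * c * A1) * norm p + 2 * c * c * A1 * norm (g q)"
      by (rule qT_bound[OF h A1 c cA1]) (rule lipG)
    have t1: "norm (q - c *\<^sub>R g q) \<le> (1 - c * A3 / 2) * r + sqrt D"
    proof (rule power2_le_imp_le)
      show "0 \<le> (1 - c * A3 / 2) * r + sqrt D" using w D0 by simp
      have "(norm (q - c *\<^sub>R g q))\<^sup>2 = r\<^sup>2 - 2 * c * (g q \<bullet> q) + c\<^sup>2 * (norm (g q))\<^sup>2"
        by (simp add: sq_expand r_def)
      also have "\<dots> \<le> r\<^sup>2 - 2 * c * (A3 * r\<^sup>2 - A4) + c\<^sup>2 * (B * (r + 1))\<^sup>2"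
        using drift[of q] c0 gb[of q] by (intro add_mono diff_mono mult_left_mono power_mono) (auto simp: r_def)
      also have "\<dots> \<le> (1 - c * A3) * r\<^sup>2 + D"
      proof -
        have a: "(r+1)\<^sup>2 \<le> 2 * r\<^sup>2 + 2" using zero_le_power2[of "r - 1"] by (simp add: power2_eq_square algebra_simps)
        have "c\<^sup>2 * (B * (r + 1))\<^sup>2 = c\<^sup>2 * B\<^sup>2 * (r+1)\<^sup>2" by (simp add: power_mult_distrib)
        also have "\<dots> \<le> c\<^sup>2 * B\<^sup>2 * (2 * r\<^sup>2 + 2)" by (rule mult_left_mono[OF a]) simp
        also have "\<dots> = 2 * c * (c * B\<^sup>2) * r\<^sup>2 + 2 * c\<^sup>2 * B\<^sup>2" by (simp add: power2_eq_square algebra_simps)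
        also have "\<dots> \<le> 2 * c * (A3 / 2) * r\<^sup>2 + 2 * c\<^sup>2 * B\<^sup>2"
          using c0 cB by (intro add_mono mult_right_mono mult_left_mono) auto
        finally have b: "c\<^sup>2 * (B * (r + 1))\<^sup>2 \<le> c * A3 * r\<^sup>2 + 2 * c\<^sup>2 * B\<^sup>2" by simp
        have "2 * c * A4 \<le> 2 * c * \<bar>A4\<bar>" using c0 by (intro mult_left_mono) auto
        then show ?thesis using b unfolding D_def by (simp add: algebra_simps)
      qed
      also have "\<dots> \<le> ((1 - c * A3 / 2) * r + sqrt D)\<^sup>2"
      proof -
        have "((1 - c * A3 / 2) * r + sqrt D)\<^sup>2 = (1 - c * A3) * r\<^sup>2 + (c * A3 / 2 * r)\<^sup>2 + 2 * ((1 - c * A3 / 2) * r) * sqrt D + D"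
          using D0 by (simp add: power2_eq_square algebra_simps)
        moreover have "0 \<le> 2 * ((1 - c * A3 / 2) * r) * sqrt D" using w D0 by simp
        ultimately show ?thesis using zero_le_power2[of "c * A3 / 2 * r"] by linarith
      qed
      finally show "(norm (q - c *\<^sub>R g q))\<^sup>2 \<le> ((1 - c * A3 / 2) * r + sqrt D)\<^sup>2" .
    qed
    have t3: "2 * c * c * A1 * norm (g q) \<le> c * A3 / 4 * r + c * A3 / 4"
    proof -
      have "2 * c * c * A1 * norm (g q) \<le> 2 * c * c * A1 * (B * (r + 1))"
        using gb[of q] c0 A1 by (intro mult_left_mono) (auto simp: r_def)
      also have "\<dots> = c * (2 * c * A1 * B) * (r + 1)" by (simp add: algebra_simps)
      also have "\<dots> \<le> c * (A3 / 4) * (r + 1)" using c0 cAB r0 by (intro mult_right_mono mult_left_mono) auto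
      finally show ?thesis by (simp add: algebra_simps)
    qed
    show ?thesis using QB t1 t3 unfolding K_def E_def r_def[symmetric] by (simp add: algebra_simps)
  qed
  have "\<exists>R. \<forall>q p. norm q \<ge> R \<longrightarrow> norm (leapfrog_q g h T q p) \<le> norm q - C + K * norm p" for C
  proof -
    have True: "c * A3 > 0" using c00 A3 by simp
    show ?thesis
    proof (intro exI[of _ "4 * (C + E) / (c * A3)"] allI impI)
      fix q p :: 'a assume "norm q \<ge> 4 * (C + E) / (c * A3)"
      then have "C + E \<le> c * A3 / 4 * norm q" using True by (simp add: divide_le_eq algebra_simps)
      then show "norm (leapfrog_q g h T q p) \<le> norm q - C + K * norm p" using gen[of q p] by linarith
    qed
  qed
  then show ?thesis using K0 by blast
qed

lemma finish:
  fixes gU :: "'a::euclidean_space \<Rightarrow> 'a"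
  assumes crude: "\<And>q p. norm (leapfrog_q gU h T q p) \<le> K0 * (norm q + norm p + 1)" and K0: "K0 \<ge> 0"
    and contr: "\<exists>K\<ge>0. \<forall>C. \<exists>R. \<forall>q p. norm q \<ge> R \<longrightarrow> norm (leapfrog_q gU h T q p) \<le> norm q - C + K * norm p"
  shows "\<exists>a>0. \<exists>lam b. 0 \<le> lam \<and> lam < 1 \<and> 0 \<le> b \<and> (\<forall>q. Qtilde_V gU h T a q \<le> ennreal (lam * Vfun a q + b))"
proof -
  obtain K where K: "K \<ge> 0" "\<And>C. \<exists>R. \<forall>q p. norm q \<ge> R \<longrightarrow> norm (leapfrog_q gU h T q p) \<le> norm q - C + K * norm p"
    using contr by blast
  define K' where "K' = max K K0"
  have cr: "norm (leapfrog_q gU h T q p) \<le> K0 + K' * norm q + K' * norm p" for q p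
  proof -
    have "K0 * norm q \<le> K' * norm q" "K0 * norm p \<le> K' * norm p" unfolding K'_def by (auto intro: mult_right_mono)
    then show ?thesis using crude[of q p] by (simp add: algebra_simps)
  qed
  have co: "\<exists>R. \<forall>q p. norm q \<ge> R \<longrightarrow> norm (leapfrog_q gU h T q p) \<le> norm q - C + K' * norm p" for C
  proof -
    obtain R where R: "\<forall>q p. norm q \<ge> R \<longrightarrow> norm (leapfrog_q gU h T q p) \<le> norm q - C + K * norm p" using K(2) by blast
    have "K * norm p \<le> K' * norm p" for p :: 'a unfolding K'_def by (auto intro: mult_right_mono)
    then show ?thesis using R by (meson add_left_mono order.trans)
  qed
  have "K' \<ge> 0" using K unfolding K'_def by simp
  from Q_abstract[of K' "leapfrog_q gU h T" K0, OF this cr co]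
  show ?thesis unfolding Qtilde_V_def by (intro exI[of _ 1]) auto
qed

theorem proposition7:
  fixes U :: "'a::euclidean_space \<Rightarrow> real"
    and gU :: "'a \<Rightarrow> 'a"
    and D2 :: "'a \<Rightarrow> ('a \<Rightarrow>\<^sub>L 'a)"
    and D3 :: "'a \<Rightarrow> ('a \<Rightarrow>\<^sub>L ('a \<Rightarrow>\<^sub>L 'a))"
    and m A1 A3 A4 :: real and T :: nat
  assumes grad: "\<And>q. (U has_derivative (\<lambda>v. gU q \<bullet> v)) (at q)"
    and hess: "\<And>q. (gU has_derivative blinfun_apply (D2 q)) (at q)"
    and third: "\<And>q. (D2 has_derivative blinfun_apply (D3 q)) (at q)"
    and D3_cont: "continuous_on UNIV D3"
    and m: "1 < m" "m \<le> 2"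
    and A1: "A1 \<ge> 0"
    and bound2: "\<And>q. norm (D2 q) \<le> A1 * (norm q + 1) powr (m - 2)"
    and bound3: "\<And>q. norm (D3 q) \<le> A1 * (norm q + 1) powr (m - 3)"
    and A3: "A3 > 0"
    and drift: "\<And>q. gU q \<bullet> q \<ge> A3 * norm q powr m - A4"
    and T: "T \<ge> 1"
  shows "(m < 2 \<longrightarrow>
            (\<forall>h>0. \<exists>a>0. \<exists>lam b. 0 \<le> lam \<and> lam < 1 \<and> 0 \<le> b \<and>
               (\<forall>q. Qtilde_V gU h T a q \<le> ennreal (lam * Vfun a q + b))))
       \<and> (m = 2 \<longrightarrow>
            (\<exists>h0>0. \<forall>h. 0 < h \<and> h \<le> h0 \<longrightarrow>
               (\<exists>a>0. \<exists>lam b. 0 \<le> lam \<and> lam < 1 \<and> 0 \<le> b \<and>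
                  (\<forall>q. Qtilde_V gU h T a q \<le> ennreal (lam * Vfun a q + b)))))"
  proof -
  have lipG: "norm (gU x - gU y) \<le> A1 * norm (x - y)" for x y
    by (rule lip_on[OF hess convex_UNIV]) (use D2_global[OF bound2 m(2) A1] in auto)
  have lg: "norm (gU x) \<le> norm (gU 0) + A1 * norm x" for x
    using lipG[of x 0] norm_triangle_ineq2[of "gU x" "gU 0"] by simp
  define B where "B = norm (gU 0) + A1 / (m - 1)"
  have B0: "B \<ge> 0" using m A1 by (simp add: B_def)
  have gb: "norm (gU q) \<le> B * (norm q + 1) powr (m - 1)" for q
  proof -
    have "1 \<le> (norm q + 1) powr (m - 1)" using m by (intro ge_one_powr_ge_zero) auto
    then have "norm (gU 0) \<le> norm (gU 0) * (norm q + 1) powr (m - 1)"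
      using mult_left_mono[of 1 _ "norm (gU 0)"] by simp
    then show ?thesis using grad_bound[OF hess bound2 m A1, of q] by (simp add: B_def algebra_simps)
  qed
  have crudeh: "\<exists>K0\<ge>0. \<forall>q p. norm (leapfrog_q gU h T q p) \<le> K0 * (norm q + norm p + 1)" if "h > 0" for h
    by (rule crude[OF lg A1 norm_ge_zero that])
  have part1: "m < 2 \<longrightarrow> (\<forall>h>0. \<exists>a>0. \<exists>lam b. 0 \<le> lam \<and> lam < 1 \<and> 0 \<le> b \<and>
               (\<forall>q. Qtilde_V gU h T a q \<le> ennreal (lam * Vfun a q + b)))"
  proof (intro impI allI)
    fix h :: real assume m2: "m < 2" and h: "h > 0"
    obtain K0 where K0: "K0 \<ge> 0" "\<And>q p. norm (leapfrog_q gU h T q p) \<le> K0 * (norm q + norm p + 1)"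
      using crudeh[OF h] by blast
    show "\<exists>a>0. \<exists>lam b. 0 \<le> lam \<and> lam < 1 \<and> 0 \<le> b \<and> (\<forall>q. Qtilde_V gU h T a q \<le> ennreal (lam * Vfun a q + b))"
      by (rule finish[OF K0(2) K0(1) contr_lt2[OF hess bound2 m(1) m2 A1 A3 drift gb B0 h T K0(2) K0(1)]])
  qed
  have part2: "m = 2 \<longrightarrow> (\<exists>h0>0. \<forall>h. 0 < h \<and> h \<le> h0 \<longrightarrow>
               (\<exists>a>0. \<exists>lam b. 0 \<le> lam \<and> lam < 1 \<and> 0 \<le> b \<and>
                  (\<forall>q. Qtilde_V gU h T a q \<le> ennreal (lam * Vfun a q + b))))"
  proof
    assume m2: "m = 2"
    define A1p where "A1p = A1 + 1"
    define Bp where "Bp = B + 1"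
    have p: "A1p > 0" "Bp > 0" using A1 B0 by (auto simp: A1p_def Bp_def)
    define c0 where "c0 = min (min (1/(2*A1p)) (A3/(2*Bp\<^sup>2))) (min (1/A3) (A3/(8*A1p*Bp)))"
    have c0p: "c0 > 0" using p A3 by (simp add: c0_def)
    define h0 where "h0 = sqrt (2 * c0) / real T"
    have Tp: "real T > 0" using T by simp
    have h0p: "h0 > 0" using c0p Tp by (simp add: h0_def)
    show "\<exists>h0>0. \<forall>h. 0 < h \<and> h \<le> h0 \<longrightarrow>
               (\<exists>a>0. \<exists>lam b. 0 \<le> lam \<and> lam < 1 \<and> 0 \<le> b \<and>
                  (\<forall>q. Qtilde_V gU h T a q \<le> ennreal (lam * Vfun a q + b)))"
    proof (rule exI[of _ h0], intro conjI allI impI h0p)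
      fix h :: real assume hh: "0 < h \<and> h \<le> h0"
      then have h: "h > 0" by simp
      define c where "c = (real T)\<^sup>2 * h\<^sup>2 / 2"
      have cpos: "c \<ge> 0" by (simp add: c_def)
      have "h\<^sup>2 \<le> h0\<^sup>2" using hh by (intro power_mono) auto
      also have "h0\<^sup>2 = 2 * c0 / (real T)\<^sup>2" using c0p by (simp add: h0_def power_divide)
      finally have "(real T)\<^sup>2 * h\<^sup>2 \<le> 2 * c0" using Tp by (simp add: le_divide_eq mult.commute)
      then have cc0: "c \<le> c0" by (simp add: c_def)
      have cA1: "c * A1 \<le> 1/2"
      proof -
        have "c * A1 \<le> c0 * A1p" using cc0 cpos A1 by (intro mult_mono) (auto simp: A1p_def)
        also have "\<dots> \<le> (1/(2*A1p)) * A1p" using p by (intro mult_right_mono) (auto simp: c0_def)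
        finally show ?thesis using p by simp
      qed
      have cB: "c * B\<^sup>2 \<le> A3 / 2"
      proof -
        have "B\<^sup>2 \<le> Bp\<^sup>2" using B0 by (intro power_mono) (auto simp: Bp_def)
        then have "c * B\<^sup>2 \<le> c0 * Bp\<^sup>2" using cc0 cpos by (intro mult_mono) auto
        also have "\<dots> \<le> (A3/(2*Bp\<^sup>2)) * Bp\<^sup>2" using p by (intro mult_right_mono) (auto simp: c0_def)
        finally show ?thesis using p by simp
      qed
      have cA3: "c * A3 \<le> 1"
      proof -
        have "c * A3 \<le> (1/A3) * A3" using cc0 A3 by (intro mult_right_mono) (auto simp: c0_def)
        then show ?thesis using A3 by simp
      qed
      have cAB: "2 * c * A1 * B \<le> A3 / 4"
      proof -
        have "A1 * B \<le> A1p * Bp" using A1 B0 by (intro mult_mono) (auto simp: A1p_def Bp_def)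
        then have "c * (A1 * B) \<le> c0 * (A1p * Bp)" by (rule mult_mono[OF cc0]) (use c0p A1 B0 in auto)
        also have "\<dots> \<le> (A3/(8*A1p*Bp)) * (A1p * Bp)" using p by (intro mult_right_mono) (auto simp: c0_def)
        finally show ?thesis using p by (simp add: algebra_simps)
      qed
      have drift2: "gU q \<bullet> q \<ge> A3 * (norm q)\<^sup>2 - A4" for q
      proof -
        have "norm q powr m = (norm q)\<^sup>2" unfolding m2 by (rule powr_numeral) simp
        then show ?thesis using drift[of q] by simp
      qed
      have gb2: "norm (gU q) \<le> B * (norm q + 1)" for q
      proof -
        have "(norm q + 1) powr (m - 1) = norm q + 1" unfolding m2 by simp
        then show ?thesis using gb[of q] by simp
      qed
      obtain K0 where K0: "K0 \<ge> 0" "\<And>q p. norm (leapfrog_q gU h T q p) \<le> K0 * (norm q + norm p + 1)"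
        using crudeh[OF h] by blast
      show "\<exists>a>0. \<exists>lam b. 0 \<le> lam \<and> lam < 1 \<and> 0 \<le> b \<and> (\<forall>q. Qtilde_V gU h T a q \<le> ennreal (lam * Vfun a q + b))"
        by (rule finish[OF K0(2) K0(1) contr_2[OF lipG A1 A3 drift2 gb2 B0 h T c_def cA1 cB cA3 cAB]])
    qed
  qed
  show ?thesis by (rule conjI[OF part1 part2])
qed

end
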